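(* Let $\theta_{01}\in\mathbb{R}$ and let $\sigma_U^2>0$, $\sigma_V^2>0$, $\sigma_{UV}\in\mathbb{R}$ satisfy $|\rho_{UV}|<1$, where $\rho_{UV}=\sigma_{UV}/(\sigma_U\sigma_V)$. Define the identified set $S$ as the set of all $\sigma_{U^*}^2\ge 0$ for which there exist $\sigma_{V^*}^2\ge 0$, $\sigma_\varepsilon^2\ge 0$ and $\sigma_{U^*V^*}\in\mathbb{R}$ with $\sigma_{U^*V^*}^2\le \sigma_{U^*}^2\sigma_{V^*}^2$ such that $$\sigma_U^2=\sigma_{U^*}^2+\theta_{01}^2\sigma_\varepsilon^2,\qquad \sigma_V^2=\sigma_{V^*}^2+\sigma_\varepsilon^2,\qquad \sigma_{UV}=\sigma_{U^*V^*}-\theta_{01}\sigma_\varepsilon^2 .$$ Then $S=[\underline{\sigma}_{U^*}^2,\sigma_U^2]$, where $$\underline{\sigma}_{U^*}^2=\max\left\{\frac{(\theta_{01}\sigma_{UV}+\sigma_U^2)^2}{\sigma_V^2\theta_{01}^2+2\sigma_{UV}\theta_{01}+\sigma_U^2},\ \sigma_U^2-\theta_{01}^2\sigma_V^2\right\}.$$ *)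

theory Defs
  imports Complex_Main
begin

definition identified_set :: "real \<Rightarrow> real \<Rightarrow> real \<Rightarrow> real \<Rightarrow> real set" where
  "identified_set \<theta> sU2 sV2 sUV =
     {sUs2. sUs2 \<ge> 0 \<and> (\<exists>sVs2 se2 sUVs. sVs2 \<ge> 0 \<and> se2 \<ge> 0 \<and> sUVs\<^sup>2 \<le> sUs2 * sVs2 \<and>
        sU2 = sUs2 + \<theta>\<^sup>2 * se2 \<and> sV2 = sVs2 + se2 \<and> sUV = sUVs - \<theta> * se2)}"

definition lower_bound :: "real \<Rightarrow> real \<Rightarrow> real \<Rightarrow> real \<Rightarrow> real" where
  "lower_bound \<theta> sU2 sV2 sUV =
     max ((\<theta> * sUV + sU2)\<^sup>2 / (sV2 * \<theta>\<^sup>2 + 2 * sUV * \<theta> + sU2)) (sU2 - \<theta>\<^sup>2 * sV2)"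

end

theory Submission
  imports Defs
begin

theorem proposition1:
  fixes \<theta> sU2 sV2 sUV :: real
  assumes "sU2 > 0" and "sV2 > 0"
    and "\<bar>sUV / (sqrt sU2 * sqrt sV2)\<bar> < 1"
  shows "identified_set \<theta> sU2 sV2 sUV = {lower_bound \<theta> sU2 sV2 sUV .. sU2}"
proof -
  define a b c t where "a = sU2" "b = sV2" "c = sUV" "t = \<theta>"
  have a0: "a > 0" and b0: "b > 0" using assms a_b_c_t_def by auto
  have sp: "sqrt a * sqrt b > 0" using a0 b0 by simp
  have "\<bar>c\<bar> < sqrt a * sqrt b" using assms(3) sp a_b_c_t_def
    by (simp add: abs_divide pos_divide_less_eq)
  hence "c\<^sup>2 < (sqrt a * sqrt b)\<^sup>2"
    by (metis abs_ge_zero power2_abs power_strict_mono zero_less_numeral)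
  hence cab: "c\<^sup>2 < a * b" using a0 b0 by (simp add: power_mult_distrib)
  define D where "D = b * t\<^sup>2 + 2 * c * t + a"
  have aD: "a * D = (a + c*t)\<^sup>2 + (a*b - c\<^sup>2) * t\<^sup>2"
    unfolding D_def by (simp add: algebra_simps power2_eq_square)
  have D0: "D > 0"
  proof (cases "t = 0")
    case True thus ?thesis using a0 D_def by simp
  next
    case False
    hence "(a*b - c\<^sup>2) * t\<^sup>2 > 0" using cab by simp
    hence "a * D > 0" using aD by (smt (verit) zero_le_power2)
    thus ?thesis using a0 by (simp add: zero_less_mult_iff)
  qed
  have key: "(c*t + a)\<^sup>2 \<le> x * D \<longleftrightarrow> (c*t + a - x)\<^sup>2 \<le> x * (b*t\<^sup>2 - a + x)" for x
    unfolding D_def by (simp add: algebra_simps power2_eq_square)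
  have lb: "lower_bound \<theta> sU2 sV2 sUV = max ((c*t + a)\<^sup>2 / D) (a - t\<^sup>2 * b)"
    unfolding lower_bound_def D_def a_b_c_t_def by (simp add: mult.commute)
  have lbx: "max ((c*t + a)\<^sup>2 / D) (a - t\<^sup>2 * b) \<le> x \<longleftrightarrow>
      (c*t + a)\<^sup>2 \<le> x * D \<and> a - t\<^sup>2 * b \<le> x" for x
    using D0 by (simp add: pos_divide_le_eq)
  show ?thesis
  proof (rule set_eqI)
    fix x
    show "x \<in> identified_set \<theta> sU2 sV2 sUV \<longleftrightarrow> x \<in> {lower_bound \<theta> sU2 sV2 sUV .. sU2}"
    proof
      assume "x \<in> identified_set \<theta> sU2 sV2 sUV"
      then obtain v e w where x0: "x \<ge> 0" and v0: "v \<ge> 0" and e0: "e \<ge> 0"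
        and w2: "w\<^sup>2 \<le> x * v" and ha: "a = x + t\<^sup>2 * e" and hb: "b = v + e"
        and hc: "c = w - t * e"
        unfolding identified_set_def a_b_c_t_def by auto
      have "x \<le> a" using ha e0 by simp
      moreover have "a - t\<^sup>2 * b \<le> x" using ha hb v0
        by (simp add: algebra_simps)
      moreover have "(c*t + a - x)\<^sup>2 \<le> x * (b*t\<^sup>2 - a + x)"
      proof -
        have "c*t + a - x = t*w" unfolding ha hc by (simp add: algebra_simps power2_eq_square)
        hence "(c*t + a - x)\<^sup>2 = t\<^sup>2 * w\<^sup>2" by (simp add: power_mult_distrib)
        also have "\<dots> \<le> t\<^sup>2 * (x * v)" using w2 by (simp add: mult_left_mono)
        also have "\<dots> = x * (b*t\<^sup>2 - a + x)" using ha hb by (simp add: algebra_simps power2_eq_square)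
        finally show ?thesis .
      qed
      ultimately show "x \<in> {lower_bound \<theta> sU2 sV2 sUV .. sU2}"
        using lb lbx key a_b_c_t_def by auto
    next
      assume "x \<in> {lower_bound \<theta> sU2 sV2 sUV .. sU2}"
      hence xa: "x \<le> a" and l1: "(c*t + a)\<^sup>2 \<le> x * D" and l2: "a - t\<^sup>2 * b \<le> x"
        using lb lbx a_b_c_t_def by auto
      have x0: "x \<ge> 0" using l1 D0
        by (smt (verit) mult_nonpos_nonneg zero_le_power2 mult_less_0_iff)
      have l3: "(c*t + a - x)\<^sup>2 \<le> x * (b*t\<^sup>2 - a + x)" using l1 key by blast
      show "x \<in> identified_set \<theta> sU2 sV2 sUV"
      proof (cases "t = 0")
        case True
        hence "x = a" using xa l2 by simp
        thus ?thesis unfolding identified_set_def a_b_c_t_def[symmetric]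
          using True a0 b0 cab
          by (intro CollectI conjI exI[of _ b] exI[of _ 0] exI[of _ c]) auto
      next
        case False
        hence t2: "t\<^sup>2 > 0" by simp
        define e where "e = (a - x) / t\<^sup>2"
        have te: "t\<^sup>2 * e = a - x" using t2 e_def by simp
        have e0: "e \<ge> 0" using xa t2 e_def by simp
        have eb: "e \<le> b" using l2 t2 e_def by (simp add: divide_le_eq algebra_simps)
        have "t\<^sup>2 * (c + t*e)\<^sup>2 \<le> t\<^sup>2 * (x * (b - e))"
        proof -
          have "t\<^sup>2 * (c + t*e)\<^sup>2 = (c*t + t\<^sup>2 * e)\<^sup>2" by (simp add: algebra_simps power2_eq_square)
          also have "\<dots> = (c*t + a - x)\<^sup>2" using te by (metis add_diff_eq)
          also have "\<dots> \<le> x * (b*t\<^sup>2 - a + x)" by (rule l3)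
          also have "\<dots> = x * (b*t\<^sup>2 - t\<^sup>2 * e)" using te by simp
          also have "\<dots> = t\<^sup>2 * (x * (b - e))" by (simp add: algebra_simps)
          finally show ?thesis .
        qed
        hence w2: "(c + t*e)\<^sup>2 \<le> x * (b - e)" using t2 by simp
        show ?thesis unfolding identified_set_def a_b_c_t_def[symmetric]
          using x0 e0 eb w2 te
          by (intro CollectI conjI exI[of _ "b - e"] exI[of _ e] exI[of _ "c + t*e"]) auto
      qed
    qed
  qed
qed

end
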